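(* Let $(\mathcal{S},\mathcal{R})$ be an $r$-complete positive presentation. Then any two elements of $\mathrm{Mon}(\mathcal{S};\mathcal{R})$ admit a common right multiple if and only if the following condition holds: there exists a set $\mathcal{S}'$ with $\mathcal{S}\subseteq\mathcal{S}'\subseteq\mathcal{S}^*$ such that for all $u,v\in\mathcal{S}'$ there exist $u',v'\in\mathcal{S}'$ satisfying $(uv')^{-1}(vu')\curvearrowright_r\varepsilon$.
   Context: A positive presentation is a pair $(\mathcal{S},\mathcal{R})$ where $\mathcal{S}$ is a nonempty set of letters and $\mathcal{R}$ is a family of relations $u=v$, i.e. unordered pairs $\{u,v\}$ of nonempty words in the free monoid $\mathcal{S}^*$ (letters are regarded as length-one words). $\varepsilon$ denotes the empty word; $\equiv$ is the smallest congruence on $\mathcal{S}^*$ containing all pairs of $\mathcal{R}$, and $\mathrm{Mon}(\mathcal{S};\mathcal{R})=\mathcal{S}^*/{\equiv}$. An element $z$ is a common right multiple of $x,y$ if $z=xa=yb$ for some $a,b$. Let $\mathcal{S}^{-1}=\{s^{-1}:s\in\mathcal{S}\}$ be a disjoint copy of $\mathcal{S}$; for $u\in\mathcal{S}^*$, $u^{-1}$ is obtained by reversing the order of the letters of $u$ and replacing each $s$ by $s^{-1}$. Right reversing: for words $\mathbf{w},\mathbf{w}'$ on $\mathcal{S}\cup\mathcal{S}^{-1}$ we write $\mathbf{w}\curvearrowright_r\mathbf{w}'$ if $\mathbf{w}'$ is obtained from $\mathbf{w}$ by a finite (possibly empty) sequence of steps, each of which either deletes a subword $u^{-1}u$ with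 $u\in\mathcal{S}^*$ nonempty, or replaces a subword $u^{-1}v$ with $u,v\in\mathcal{S}^*$ nonempty by a word $v'u'^{-1}$ with $u',v'\in\mathcal{S}^*$ such that $uv'=vu'$ is a relation of $\mathcal{R}$. $(\mathcal{S},\mathcal{R})$ is $r$-complete if for all $u,v,u',v'\in\mathcal{S}^*$ with $uv'\equiv vu'$ there exist $u'',v'',w\in\mathcal{S}^*$ with $u^{-1}v\curvearrowright_r v''u''^{-1}$, $u'\equiv u''w$ and $v'\equiv v''w$. *)

theory Defs
  imports Main
begin

text \<open>Positive words are lists ('a list); S* is lists S.
  Relations R :: ('a list \<times> 'a list) set; a relation u = v is an unordered pair,
  so (u,v) \<in> R and (v,u) \<in> R are both read as the relation u = v.\<close>

definition positive_presentation :: "'a set \<Rightarrow> ('a list \<times> 'a list) set \<Rightarrow> bool" where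
  "positive_presentation S R \<longleftrightarrow> S \<noteq> {} \<and>
     (\<forall>(u,v)\<in>R. u \<in> lists S \<and> v \<in> lists S \<and> u \<noteq> [] \<and> v \<noteq> [])"

definition is_rel :: "('a list \<times> 'a list) set \<Rightarrow> 'a list \<Rightarrow> 'a list \<Rightarrow> bool" where
  "is_rel R u v \<longleftrightarrow> (u, v) \<in> R \<or> (v, u) \<in> R"

definition rel_step :: "('a list \<times> 'a list) set \<Rightarrow> 'a list \<Rightarrow> 'a list \<Rightarrow> bool" where
  "rel_step R w w' \<longleftrightarrow> (\<exists>x y l r. is_rel R l r \<and> w = x @ l @ y \<and> w' = x @ r @ y)"

text \<open>The congruence generated by R: the reflexive-transitive closure of the
  symmetric elementary steps (the smallest congruence containing R).\<close>
definition cong_R :: "('a list \<times> 'a list) set \<Rightarrow> 'a list \<Rightarrow> 'a list \<Rightarrow> bool" where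
  "cong_R R = (rel_step R)\<^sup>*\<^sup>*"

text \<open>Signed words: a letter (s, True) is s, a letter (s, False) is s^{-1}.\<close>
definition pos :: "'a list \<Rightarrow> ('a \<times> bool) list" where
  "pos u = map (\<lambda>s. (s, True)) u"

definition neg :: "'a list \<Rightarrow> ('a \<times> bool) list" where
  "neg u = rev (map (\<lambda>s. (s, False)) u)"

definition rrev_step :: "'a set \<Rightarrow> ('a list \<times> 'a list) set \<Rightarrow>
    ('a \<times> bool) list \<Rightarrow> ('a \<times> bool) list \<Rightarrow> bool" where
  "rrev_step S R w w' \<longleftrightarrow>
     (\<exists>x y u. u \<in> lists S \<and> u \<noteq> [] \<and> w = x @ neg u @ pos u @ y \<and> w' = x @ y) \<or>
     (\<exists>x y u v u' v'. u \<in> lists S \<and> v \<in> lists S \<and> u \<noteq> [] \<and> v \<noteq> [] \<and>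
        u' \<in> lists S \<and> v' \<in> lists S \<and> is_rel R (u @ v') (v @ u') \<and>
        w = x @ neg u @ pos v @ y \<and> w' = x @ pos v' @ neg u' @ y)"

definition rrev :: "'a set \<Rightarrow> ('a list \<times> 'a list) set \<Rightarrow>
    ('a \<times> bool) list \<Rightarrow> ('a \<times> bool) list \<Rightarrow> bool" where
  "rrev S R = (rrev_step S R)\<^sup>*\<^sup>*"

definition r_complete :: "'a set \<Rightarrow> ('a list \<times> 'a list) set \<Rightarrow> bool" where
  "r_complete S R \<longleftrightarrow>
     (\<forall>u\<in>lists S. \<forall>v\<in>lists S. \<forall>u'\<in>lists S. \<forall>v'\<in>lists S.
        cong_R R (u @ v') (v @ u') \<longrightarrow>
        (\<exists>u''\<in>lists S. \<exists>v''\<in>lists S. \<exists>w\<in>lists S.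
           rrev S R (neg u @ pos v) (pos v'' @ neg u'') \<and>
           cong_R R u' (u'' @ w) \<and> cong_R R v' (v'' @ w)))"

text \<open>Any two elements of Mon(S;R) = S*/cong admit a common right multiple:
  stated on representatives (every element is the class of a word in S*).\<close>
definition common_right_multiples :: "'a set \<Rightarrow> ('a list \<times> 'a list) set \<Rightarrow> bool" where
  "common_right_multiples S R \<longleftrightarrow>
     (\<forall>x\<in>lists S. \<forall>y\<in>lists S. \<exists>a\<in>lists S. \<exists>b\<in>lists S. cong_R R (x @ a) (y @ b))"

end

theory Submission
  imports Defs
begin

lemma cong_refl: "cong_R R a a"
  by (simp add: cong_R_def)

lemma cong_trans: "cong_R R a b \<Longrightarrow> cong_R R b c \<Longrightarrow> cong_R R a c"
  unfolding cong_R_def by (rule rtranclp_trans)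

lemma rel_step_sym: "rel_step R a b \<Longrightarrow> rel_step R b a"
  unfolding rel_step_def is_rel_def by blast

lemma cong_sym: "cong_R R a b \<Longrightarrow> cong_R R b a"
  unfolding cong_R_def
proof (induction rule: rtranclp_induct)
  case base then show ?case by simp
next
  case (step y z)
  then show ?case using converse_rtranclp_into_rtranclp[OF rel_step_sym[OF step(2)] step(3)] by simp
qed

lemma rel_step_ctx: "rel_step R a b \<Longrightarrow> rel_step R (x@a@y) (x@b@y)"
  unfolding rel_step_def
proof -
  assume "\<exists>x y l r. is_rel R l r \<and> a = x @ l @ y \<and> b = x @ r @ y"
  then obtain x1 y1 l r where "is_rel R l r" "a = x1 @ l @ y1" "b = x1 @ r @ y1" by blast
  then show "\<exists>x' y' l r. is_rel R l r \<and> x @ a @ y = x' @ l @ y' \<and> x @ b @ y = x' @ r @ y'"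
    by (rule_tac x="x@x1" in exI, rule_tac x="y1@y" in exI) auto
qed

lemma cong_ctx: "cong_R R a b \<Longrightarrow> cong_R R (x@a@y) (x@b@y)"
  unfolding cong_R_def
proof (induction rule: rtranclp_induct)
  case base then show ?case by simp
next
  case (step y' z)
  then show ?case using rtranclp.rtrancl_into_rtrancl[OF step(3) rel_step_ctx[OF step(2)]] by simp
qed

lemma cong_app_r: "cong_R R a b \<Longrightarrow> cong_R R (a@y) (b@y)"
  using cong_ctx[of R a b "[]" y] by simp

lemma cong_app_l: "cong_R R a b \<Longrightarrow> cong_R R (x@a) (x@b)"
  using cong_ctx[of R a b x "[]"] by simp

lemma cong_rel: "is_rel R a b \<Longrightarrow> cong_R R a b"
  unfolding cong_R_def rel_step_def
  by (rule r_into_rtranclp) (rule_tac x="[]" in exI, rule_tac x="[]" in exI, auto)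

fun E :: "('a list \<times> 'a list) set \<Rightarrow> ('a \<times> bool) list \<Rightarrow> 'a list \<Rightarrow> 'a list \<Rightarrow> bool" where
  "E R [] p q = cong_R R p q"
| "E R ((s,True)#w) p q = E R w (p@[s]) q"
| "E R ((s,False)#w) p q = (\<exists>p'. cong_R R p (p'@[s]) \<and> E R w p' q)"

lemma E_cong_left: "cong_R R p p2 \<Longrightarrow> E R w p q \<Longrightarrow> E R w p2 q"
proof (induction R w p q arbitrary: p2 rule: E.induct)
  case (1 R p q)
  then show ?case using cong_trans[OF cong_sym[OF 1(1)]] by simp
next
  case (2 R s w p q)
  then show ?case using cong_app_r by fastforce
next
  case (3 R s w p q)
  then obtain p' where a: "cong_R R p (p'@[s])" "E R w p' q" by auto
  have "cong_R R p2 (p'@[s])" using cong_trans[OF cong_sym[OF 3(2)] a(1)] .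
  then show ?case using a(2) by auto
qed

lemma E_append: "E R (x@y) p q \<longleftrightarrow> (\<exists>m. E R x p m \<and> E R y m q)"
proof (induction x arbitrary: p)
  case Nil
  show ?case
  proof
    assume "E R ([] @ y) p q" then show "\<exists>m. E R [] p m \<and> E R y m q" using cong_refl by auto
  next
    assume "\<exists>m. E R [] p m \<and> E R y m q"
    then obtain m where m: "cong_R R p m" "E R y m q" by auto
    show "E R ([] @ y) p q" using E_cong_left[OF cong_sym[OF m(1)] m(2)] by simp
  qed
next
  case (Cons a x)
  obtain s b where a: "a = (s,b)" by fastforce
  show ?case
  proof (cases b)
    case True
    then show ?thesis using a Cons by simp
  next
    case False
    then show ?thesis using a Cons by auto
  qed
qed

lemma E_pos: "E R (pos a) p q \<longleftrightarrow> cong_R R (p@a) q"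
  by (induction a arbitrary: p) (auto simp: pos_def)

lemma neg_Cons: "neg (s#a) = neg a @ [(s,False)]"
  by (simp add: neg_def)

lemma neg_append: "neg (a@b) = neg b @ neg a"
  by (simp add: neg_def)

lemma pos_append: "pos (a@b) = pos a @ pos b"
  by (simp add: pos_def)

lemma E_neg: "E R (neg a) p q \<longleftrightarrow> cong_R R p (q@a)"
proof (induction a arbitrary: p q)
  case Nil
  then show ?case by (simp add: neg_def)
next
  case (Cons s a)
  show ?case
  proof
    assume "E R (neg (s # a)) p q"
    then obtain m where m: "E R (neg a) p m" "E R [(s,False)] m q"
      unfolding neg_Cons E_append by blast
    from m(2) obtain p' where p': "cong_R R m (p'@[s])" "cong_R R p' q" by auto
    have 1: "cong_R R p (m@a)" using m(1) Cons by blast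
    have 2: "cong_R R (m@a) (p'@[s]@a)" using cong_app_r[OF p'(1), of a] by simp
    have 3: "cong_R R (p'@[s]@a) (q@[s]@a)" using cong_app_r[OF p'(2), of "[s]@a"] by simp
    show "cong_R R p (q @ s # a)" using cong_trans[OF cong_trans[OF 1 2] 3] by simp
  next
    assume "cong_R R p (q @ s # a)"
    then have "E R (neg a) p (q@[s])" using Cons by simp
    moreover have "E R [(s,False)] (q@[s]) q" using cong_refl by auto
    ultimately show "E R (neg (s # a)) p q" unfolding neg_Cons E_append by blast
  qed
qed

lemma E_app3: "E R (x @ y @ z) p q \<Longrightarrow> (\<exists>m1 m2. E R x p m1 \<and> E R y m1 m2 \<and> E R z m2 q)"
  unfolding E_append by blast

lemma E_app3I: "E R x p m1 \<Longrightarrow> E R y m1 m2 \<Longrightarrow> E R z m2 q \<Longrightarrow> E R (x @ y @ z) p q"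
  unfolding E_append by blast

lemma E_step: "rrev_step S R w w' \<Longrightarrow> E R w p q \<Longrightarrow> E R w' p q"
  unfolding rrev_step_def
proof (elim disjE exE conjE)
  fix x y u
  assume w: "w = x @ neg u @ pos u @ y" "w' = x @ y" and e: "E R w p q"
  have "E R (x @ (neg u @ pos u) @ y) p q" using e w by simp
  then obtain m1 m' where a: "E R x p m1" "E R (neg u @ pos u) m1 m'" "E R y m' q"
    using E_app3 by blast
  from a(2) obtain m2 where b: "E R (neg u) m1 m2" "E R (pos u) m2 m'" unfolding E_append by blast
  have c: "cong_R R m1 (m2@u)" "cong_R R (m2@u) m'" using b E_neg E_pos by blast+
  have "E R y m1 q" using E_cong_left[OF cong_sym[OF cong_trans[OF c]] a(3)] .
  then have "E R (x @ y) p q" using a(1) unfolding E_append by blast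
  then show "E R w' p q" using w by simp
next
  fix x y u v u' v'
  assume r: "is_rel R (u @ v') (v @ u')"
    and w: "w = x @ neg u @ pos v @ y" "w' = x @ pos v' @ neg u' @ y" and e: "E R w p q"
  have "E R (x @ (neg u @ pos v) @ y) p q" using e w by simp
  then obtain m1 m' where a: "E R x p m1" "E R (neg u @ pos v) m1 m'" "E R y m' q"
    using E_app3 by blast
  from a(2) obtain m2 where b: "E R (neg u) m1 m2" "E R (pos v) m2 m'" unfolding E_append by blast
  have c: "cong_R R m1 (m2@u)" "cong_R R (m2@v) m'" using b E_neg E_pos by blast+
  have "cong_R R (m1@v') (m2@u@v')" using cong_app_r[OF c(1), of v'] by simp
  moreover have "cong_R R (m2@u@v') (m2@v@u')" using cong_app_l[OF cong_rel[OF r]] by blast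
  moreover have "cong_R R (m2@v@u') (m'@u')" using cong_app_r[OF c(2), of u'] by simp
  ultimately have d: "cong_R R (m1@v') (m'@u')" using cong_trans by blast
  have "E R (pos v') m1 (m1@v')" using E_pos cong_refl by blast
  moreover have "E R (neg u') (m1@v') m'" using E_neg d by blast
  ultimately have "E R (pos v' @ neg u') m1 m'" unfolding E_append by blast
  then have "E R (x @ (pos v' @ neg u') @ y) p q" using a(1) a(3) E_app3I by blast
  then show "E R w' p q" using w by simp
qed

lemma E_rrev: "rrev S R w w' \<Longrightarrow> E R w p q \<Longrightarrow> E R w' p q"
  unfolding rrev_def
  by (induction rule: rtranclp_induct) (auto intro: E_step)

lemma rrev_eps_cong:
  assumes "rrev S R (neg (u @ v') @ pos (v @ u')) []"
  shows "cong_R R (u@v') (v@u')"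
proof -
  have "E R (neg (u @ v') @ pos (v @ u')) (u@v') (v@u')"
    by (auto simp: E_append E_pos E_neg intro!: exI[of _ "[]"] cong_refl)
  from E_rrev[OF assms this] show ?thesis by simp
qed

lemma grid1:
  assumes cl: "\<forall>u\<in>S'. \<forall>v\<in>S'. \<exists>u'\<in>S'. \<exists>v'\<in>S'. cong_R R (u@v') (v@u')"
  shows "x \<in> lists S' \<Longrightarrow> v \<in> S' \<Longrightarrow> \<exists>x'\<in>lists S'. \<exists>v''\<in>S'. cong_R R (concat x @ v'') (v @ concat x')"
proof (induction x arbitrary: v)
  case Nil
  have "cong_R R (concat [] @ v) (v @ concat [])" using cong_refl by simp
  then show ?case using Nil(2) lists.Nil by blast
next
  case (Cons u x1)
  have u: "u \<in> S'" and x1: "x1 \<in> lists S'" using Cons(2) by auto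
  from cl u Cons(3) obtain u' v' where uv: "u' \<in> S'" "v' \<in> S'" "cong_R R (u@v') (v@u')" by blast
  from Cons.IH[OF x1 uv(2)] obtain x1' v'' where x: "x1' \<in> lists S'" "v'' \<in> S'" "cong_R R (concat x1 @ v'') (v' @ concat x1')"
    by blast
  have "cong_R R (u @ concat x1 @ v'') (u @ v' @ concat x1')" using x(3) cong_app_l by blast
  moreover have "cong_R R ((u @ v') @ concat x1') ((v @ u') @ concat x1')" using uv(3) cong_app_r by blast
  ultimately have "cong_R R (concat (u#x1) @ v'') (v @ concat (u'#x1'))" using cong_trans by fastforce
  moreover have "u'#x1' \<in> lists S'" using uv(1) x(1) by simp
  ultimately show ?case using x(2) by blast
qed

lemma grid2:
  assumes cl: "\<forall>u\<in>S'. \<forall>v\<in>S'. \<exists>u'\<in>S'. \<exists>v'\<in>S'. cong_R R (u@v') (v@u')"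
  shows "y \<in> lists S' \<Longrightarrow> x \<in> lists S' \<Longrightarrow> \<exists>x'\<in>lists S'. \<exists>y'\<in>lists S'. cong_R R (concat x @ concat y') (concat y @ concat x')"
proof (induction y arbitrary: x)
  case Nil
  have "cong_R R (concat x @ concat []) (concat [] @ concat x)" using cong_refl by simp
  then show ?case using Nil(2) lists.Nil by blast
next
  case (Cons v y1)
  have v: "v \<in> S'" and y1: "y1 \<in> lists S'" using Cons(2) by auto
  from grid1[OF cl Cons(3) v] obtain x1' v'' where a: "x1' \<in> lists S'" "v'' \<in> S'" "cong_R R (concat x @ v'') (v @ concat x1')"
    by blast
  from Cons.IH[OF y1 a(1)] obtain x'' y1' where b: "x'' \<in> lists S'" "y1' \<in> lists S'"
    "cong_R R (concat x1' @ concat y1') (concat y1 @ concat x'')" by blast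
  have "cong_R R ((concat x @ v'') @ concat y1') ((v @ concat x1') @ concat y1')" using a(3) cong_app_r by blast
  moreover have "cong_R R (v @ concat x1' @ concat y1') (v @ concat y1 @ concat x'')" using b(3) cong_app_l by blast
  ultimately have "cong_R R (concat x @ concat (v''#y1')) (concat (v#y1) @ concat x'')" using cong_trans by fastforce
  moreover have "v''#y1' \<in> lists S'" using a(2) b(2) by simp
  ultimately show ?case using b(1) by blast
qed

lemma concat_lists: "S' \<subseteq> lists S \<Longrightarrow> x \<in> lists S' \<Longrightarrow> concat x \<in> lists S"
  by (induction x) auto

lemma rrev_step_ctx: "rrev_step S R y z \<Longrightarrow> rrev_step S R (a@y@b) (a@z@b)"
  unfolding rrev_step_def
proof (elim disjE exE conjE)
  fix x ya u
  assume h: "u \<in> lists S" "u \<noteq> []" "y = x @ neg u @ pos u @ ya" "z = x @ ya"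
  show "(\<exists>x ya u. u \<in> lists S \<and> u \<noteq> [] \<and> a @ y @ b = x @ neg u @ pos u @ ya \<and> a @ z @ b = x @ ya) \<or>
    (\<exists>x ya u v u' v'. u \<in> lists S \<and> v \<in> lists S \<and> u \<noteq> [] \<and> v \<noteq> [] \<and>
        u' \<in> lists S \<and> v' \<in> lists S \<and> is_rel R (u @ v') (v @ u') \<and>
        a @ y @ b = x @ neg u @ pos v @ ya \<and> a @ z @ b = x @ pos v' @ neg u' @ ya)"
    apply (rule disjI1)
    apply (rule exI[of _ "a@x"], rule exI[of _ "ya@b"], rule exI[of _ u])
    using h by simp
next
  fix x ya u v u' v'
  assume h: "u \<in> lists S" "v \<in> lists S" "u \<noteq> []" "v \<noteq> []" "u' \<in> lists S" "v' \<in> lists S"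
    "is_rel R (u @ v') (v @ u')" "y = x @ neg u @ pos v @ ya" "z = x @ pos v' @ neg u' @ ya"
  show "(\<exists>x ya u. u \<in> lists S \<and> u \<noteq> [] \<and> a @ y @ b = x @ neg u @ pos u @ ya \<and> a @ z @ b = x @ ya) \<or>
    (\<exists>x ya u v u' v'. u \<in> lists S \<and> v \<in> lists S \<and> u \<noteq> [] \<and> v \<noteq> [] \<and>
        u' \<in> lists S \<and> v' \<in> lists S \<and> is_rel R (u @ v') (v @ u') \<and>
        a @ y @ b = x @ neg u @ pos v @ ya \<and> a @ z @ b = x @ pos v' @ neg u' @ ya)"
    apply (rule disjI2)
    apply (rule exI[of _ "a@x"], rule exI[of _ "ya@b"], rule exI[of _ u], rule exI[of _ v],
      rule exI[of _ u'], rule exI[of _ v'])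
    using h by simp
qed

lemma rrev_ctx: "rrev S R w w' \<Longrightarrow> rrev S R (a@w@b) (a@w'@b)"
  unfolding rrev_def
proof (induction rule: rtranclp_induct)
  case base then show ?case by simp
next
  case (step y z)
  show ?case using rtranclp.rtrancl_into_rtrancl[OF step(3) rrev_step_ctx[OF step(2)]] .
qed

lemma rrev_cancel: "u \<in> lists S \<Longrightarrow> rrev S R (neg u @ pos u) []"
proof (cases "u = []")
  case True then show ?thesis by (simp add: rrev_def neg_def pos_def)
next
  case False
  assume u: "u \<in> lists S"
  have "rrev_step S R (neg u @ pos u) []" unfolding rrev_step_def
    apply (rule disjI1)
    apply (rule exI[of _ "[]"], rule exI[of _ "[]"], rule exI[of _ u])
    using False u by simp
  then show ?thesis unfolding rrev_def by simp
qed

theorem proposition6p6: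
  fixes S :: "'a set" and R :: "('a list \<times> 'a list) set"
  assumes "positive_presentation S R"
    and "r_complete S R"
  shows "common_right_multiples S R \<longleftrightarrow>
    (\<exists>S'. (\<lambda>s. [s]) ` S \<subseteq> S' \<and> S' \<subseteq> lists S \<and>
       (\<forall>u\<in>S'. \<forall>v\<in>S'. \<exists>u'\<in>S'. \<exists>v'\<in>S'.
          rrev S R (neg (u @ v') @ pos (v @ u')) []))"
proof
  assume crm: "common_right_multiples S R"
  show "\<exists>S'. (\<lambda>s. [s]) ` S \<subseteq> S' \<and> S' \<subseteq> lists S \<and>
       (\<forall>u\<in>S'. \<forall>v\<in>S'. \<exists>u'\<in>S'. \<exists>v'\<in>S'.
          rrev S R (neg (u @ v') @ pos (v @ u')) [])"
  proof (rule exI[of _ "lists S"], intro conjI ballI)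
    show "(\<lambda>s. [s]) ` S \<subseteq> lists S" by auto
    show "lists S \<subseteq> lists S" by simp
    fix u v assume u: "u \<in> lists S" and v: "v \<in> lists S"
    from crm u v obtain a b where ab: "a \<in> lists S" "b \<in> lists S" "cong_R R (u@a) (v@b)"
      unfolding common_right_multiples_def by blast
    have rc: "\<forall>u\<in>lists S. \<forall>v\<in>lists S. \<forall>u'\<in>lists S. \<forall>v'\<in>lists S.
        cong_R R (u @ v') (v @ u') \<longrightarrow>
        (\<exists>u''\<in>lists S. \<exists>v''\<in>lists S. \<exists>w\<in>lists S.
           rrev S R (neg u @ pos v) (pos v'' @ neg u'') \<and>
           cong_R R u' (u'' @ w) \<and> cong_R R v' (v'' @ w))"
      using assms(2) unfolding r_complete_def .
    from rc[rule_format, OF u v ab(2) ab(1) ab(3)] obtain u'' v'' where uv: "u'' \<in> lists S" "v'' \<in> lists S"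
      "rrev S R (neg u @ pos v) (pos v'' @ neg u'')" by blast
    have e1: "rrev S R (neg v'' @ (neg u @ pos v) @ pos u'') (neg v'' @ (pos v'' @ neg u'') @ pos u'')"
      by (rule rrev_ctx[OF uv(3)])
    moreover have "rrev S R ([] @ (neg v'' @ pos v'') @ (neg u'' @ pos u'')) ([] @ [] @ (neg u'' @ pos u''))"
      by (rule rrev_ctx[OF rrev_cancel[OF uv(2)]])
    then have e2: "rrev S R (neg v'' @ (pos v'' @ neg u'') @ pos u'') (neg u'' @ pos u'')" by simp
    have e3: "rrev S R (neg u'' @ pos u'') []" by (rule rrev_cancel[OF uv(1)])
    have "rrev S R (neg v'' @ (neg u @ pos v) @ pos u'') []"
      using e1 e2 e3 unfolding rrev_def by (meson rtranclp_trans)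
    moreover have "neg (u @ v'') @ pos (v @ u'') = neg v'' @ (neg u @ pos v) @ pos u''"
      by (simp add: neg_append pos_append)
    ultimately have "rrev S R (neg (u @ v'') @ pos (v @ u'')) []" by simp
    then show "\<exists>u'\<in>lists S. \<exists>v'\<in>lists S. rrev S R (neg (u @ v') @ pos (v @ u')) []"
      using uv by blast
  qed
next
  assume "\<exists>S'. (\<lambda>s. [s]) ` S \<subseteq> S' \<and> S' \<subseteq> lists S \<and>
       (\<forall>u\<in>S'. \<forall>v\<in>S'. \<exists>u'\<in>S'. \<exists>v'\<in>S'.
          rrev S R (neg (u @ v') @ pos (v @ u')) [])"
  then obtain S' where s1: "(\<lambda>s. [s]) ` S \<subseteq> S'" and s2: "S' \<subseteq> lists S"
    and s3: "\<forall>u\<in>S'. \<forall>v\<in>S'. \<exists>u'\<in>S'. \<exists>v'\<in>S'. rrev S R (neg (u @ v') @ pos (v @ u')) []"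
    by blast
  have cl: "\<forall>u\<in>S'. \<forall>v\<in>S'. \<exists>u'\<in>S'. \<exists>v'\<in>S'. cong_R R (u@v') (v@u')"
  proof (intro ballI)
    fix u v assume "u \<in> S'" "v \<in> S'"
    with s3 obtain u' v' where "u' \<in> S'" "v' \<in> S'" "rrev S R (neg (u @ v') @ pos (v @ u')) []" by blast
    then show "\<exists>u'\<in>S'. \<exists>v'\<in>S'. cong_R R (u@v') (v@u')" using rrev_eps_cong by blast
  qed
  have emb: "map (\<lambda>s. [s]) x \<in> lists S' \<and> concat (map (\<lambda>s. [s]) x) = x" if "x \<in> lists S" for x
    using that s1 by (induction x) auto
  show "common_right_multiples S R"
    unfolding common_right_multiples_def
  proof (intro ballI)
    fix x y assume x: "x \<in> lists S" and y: "y \<in> lists S"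
    from grid2[OF cl, of "map (\<lambda>s. [s]) y" "map (\<lambda>s. [s]) x"] emb[OF x] emb[OF y]
    obtain x' y' where "x' \<in> lists S'" "y' \<in> lists S'" "cong_R R (x @ concat y') (y @ concat x')"
      by auto
    then show "\<exists>a\<in>lists S. \<exists>b\<in>lists S. cong_R R (x @ a) (y @ b)"
      using concat_lists[OF s2] by blast
  qed
qed

end
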